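(* Let $\mathfrak{B}=\bigcup_{\alpha<\xi}B_\alpha$ be a tightly $\sigma$-filtered Boolean algebra with its fixed chain $(B_\alpha)_{\alpha<\xi}$ and countable subalgebras $R_\alpha,S_\alpha$. Let $\Delta,\Gamma_1,\ldots,\Gamma_n$ be saturated subsets of $\xi$ such that $\Gamma_i\cap\Gamma_j=\Delta$ for all $i\neq j$. Let $P(x_1,\ldots,x_n)$ be a Boolean polynomial and let $a_i\in E(\Gamma_i)$ ($i=1,\ldots,n$) satisfy $P(a_1,\ldots,a_n)=0$. Then there exist $r_i^-,r_i^+\in E(\Delta)$ with $r_i^-\le a_i\le r_i^+$ for each $i$ and $P(r_1^{\varepsilon_1},\ldots,r_n^{\varepsilon_n})=0$ for every choice of signs $\varepsilon_i\in\{+,-\}$.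
   Context: For a subset $X$ of a Boolean algebra, $\langle X\rangle$ is the subalgebra generated by $X$. Two subalgebras $A,S$ commute if whenever $a\in A$, $s\in S$, $a\wedge s=0$, there exist $b_1,b_2\in A\cap S$ with $a\le b_1$, $s\le b_2$, $b_1\wedge b_2=0$. A square of inclusions $R\subseteq A\subseteq B$, $R\subseteq S\subseteq B$ is a push-out diagram if $\langle A\cup S\rangle=B$, $A\cap S=R$, and $A,S$ commute. $\mathfrak{B}$ is tightly $\sigma$-filtered via an increasing chain of subalgebras $(B_\alpha)_{\alpha<\xi}$ ($\xi$ an ordinal) with $B_0=\{0,1\}$, $\mathfrak{B}=\bigcup_{\alpha<\xi}B_\alpha$, $B_\alpha=\bigcup_{\beta<\alpha}B_\beta$ for limit $\alpha$, and for each $\alpha<\xi$ countable subalgebras $R_\alpha,S_\alpha\subseteq\mathfrak{B}$ such that $R_\alpha\subseteq B_\alpha\subseteq B_{\alpha+1}$, $R_\alpha\subseteq S_\alpha\subseteq B_{\alpha+1}$ is a push-out diagram. For $\Gamma\subseteq\xi$, $E(\Gamma)=\langle\bigcup_{i\in\Gamma}S_i\rangle$. A set $\Gamma\subseteq\xi$ is saturated if $R_\gamma\subseteq E(\Gamma\cap\gamma)$ for every $\gamma\in\Gamma$. *)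

theory Defs
  imports Main "HOL-Library.Countable_Set"
begin

definition subalgebra :: "'b::boolean_algebra set \<Rightarrow> bool" where
  "subalgebra A \<longleftrightarrow> bot \<in> A \<and> top \<in> A \<and>
     (\<forall>x\<in>A. \<forall>y\<in>A. inf x y \<in> A \<and> sup x y \<in> A) \<and> (\<forall>x\<in>A. - x \<in> A)"

definition gen :: "'b::boolean_algebra set \<Rightarrow> 'b set" where
  "gen X = \<Inter> {A. subalgebra A \<and> X \<subseteq> A}"

definition commute :: "'b::boolean_algebra set \<Rightarrow> 'b set \<Rightarrow> bool" where
  "commute A S \<longleftrightarrow> (\<forall>a\<in>A. \<forall>s\<in>S. inf a s = bot \<longrightarrow>
     (\<exists>b1\<in>A \<inter> S. \<exists>b2\<in>A \<inter> S. a \<le> b1 \<and> s \<le> b2 \<and> inf b1 b2 = bot))"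

definition pushout :: "'b::boolean_algebra set \<Rightarrow> 'b set \<Rightarrow> 'b set \<Rightarrow> 'b set \<Rightarrow> bool" where
  "pushout R A S B \<longleftrightarrow> subalgebra R \<and> subalgebra A \<and> subalgebra S \<and> subalgebra B \<and>
     R \<subseteq> A \<and> A \<subseteq> B \<and> R \<subseteq> S \<and> S \<subseteq> B \<and>
     gen (A \<union> S) = B \<and> A \<inter> S = R \<and> commute A S"

section \<open>Tight sigma-filtrations, indexed by a well-ordered type (the ordinal xi)\<close>

definition is_limit :: "'o::wellorder \<Rightarrow> bool" where
  "is_limit \<alpha> \<longleftrightarrow> (\<exists>\<beta>. \<beta> < \<alpha>) \<and> (\<forall>\<beta><\<alpha>. \<exists>\<gamma>. \<beta> < \<gamma> \<and> \<gamma> < \<alpha>)"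

text \<open>B_(alpha+1); if alpha is the last index (alpha+1 = xi) this is the whole union.\<close>
definition next_stage :: "('o::wellorder \<Rightarrow> 'b set) \<Rightarrow> 'o \<Rightarrow> 'b set" where
  "next_stage B \<alpha> = (if \<exists>\<gamma>. \<alpha> < \<gamma> then B (LEAST \<gamma>. \<alpha> < \<gamma>) else \<Union> (range B))"

definition tightly_sigma_filtered ::
  "('o::wellorder \<Rightarrow> 'b::boolean_algebra set) \<Rightarrow> ('o \<Rightarrow> 'b set) \<Rightarrow> ('o \<Rightarrow> 'b set) \<Rightarrow> bool" where
  "tightly_sigma_filtered B R S \<longleftrightarrow>
     (\<forall>\<alpha>. subalgebra (B \<alpha>)) \<and> mono B \<and>
     (\<forall>\<alpha>. (\<forall>\<beta>. \<alpha> \<le> \<beta>) \<longrightarrow> B \<alpha> = {bot, top}) \<and>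
     \<Union> (range B) = UNIV \<and>
     (\<forall>\<alpha>. is_limit \<alpha> \<longrightarrow> B \<alpha> = \<Union> (B ` {..<\<alpha>})) \<and>
     (\<forall>\<alpha>. countable (R \<alpha>) \<and> countable (S \<alpha>) \<and>
           pushout (R \<alpha>) (B \<alpha>) (S \<alpha>) (next_stage B \<alpha>))"

definition E :: "('o \<Rightarrow> 'b::boolean_algebra set) \<Rightarrow> 'o set \<Rightarrow> 'b set" where
  "E S \<Gamma> = gen (\<Union> (S ` \<Gamma>))"

definition saturated :: "('o::wellorder \<Rightarrow> 'b::boolean_algebra set) \<Rightarrow> ('o \<Rightarrow> 'b set) \<Rightarrow> 'o set \<Rightarrow> bool" where
  "saturated R S \<Gamma> \<longleftrightarrow> (\<forall>\<gamma>\<in>\<Gamma>. R \<gamma> \<subseteq> E S (\<Gamma> \<inter> {..<\<gamma>}))"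

datatype bpoly = Var nat | Zero | One | Meet bpoly bpoly | Join bpoly bpoly | Neg bpoly

fun bvars :: "bpoly \<Rightarrow> nat set" where
  "bvars (Var i) = {i}"
| "bvars Zero = {}"
| "bvars One = {}"
| "bvars (Meet p q) = bvars p \<union> bvars q"
| "bvars (Join p q) = bvars p \<union> bvars q"
| "bvars (Neg p) = bvars p"

fun beval :: "bpoly \<Rightarrow> (nat \<Rightarrow> 'b::boolean_algebra) \<Rightarrow> 'b" where
  "beval (Var i) v = v i"
| "beval Zero v = bot"
| "beval One v = top"
| "beval (Meet p q) v = inf (beval p v) (beval q v)"
| "beval (Join p q) v = sup (beval p v) (beval q v)"
| "beval (Neg p) v = - beval p v"

end

theory Submission
  imports Defs
begin



lemma gen_sub: "X \<subseteq> gen X" unfolding gen_def by blast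
lemma gen_least: "subalgebra A \<Longrightarrow> X \<subseteq> A \<Longrightarrow> gen X \<subseteq> A" unfolding gen_def by blast
lemma gen_mono: "X \<subseteq> Y \<Longrightarrow> gen X \<subseteq> gen Y" unfolding gen_def by blast
lemma subalgebra_gen: "subalgebra (gen X)" unfolding gen_def subalgebra_def by blast

lemma subD:
  assumes "subalgebra A"
  shows "bot \<in> A" "top \<in> A" "x \<in> A \<Longrightarrow> y \<in> A \<Longrightarrow> inf x y \<in> A"
    "x \<in> A \<Longrightarrow> y \<in> A \<Longrightarrow> sup x y \<in> A" "x \<in> A \<Longrightarrow> - x \<in> A"
  using assms unfolding subalgebra_def by auto

lemma sub_bt: "subalgebra {bot, top::'b::boolean_algebra}"
  unfolding subalgebra_def by auto

lemma gen_empty: "gen {} \<subseteq> {bot, top::'b::boolean_algebra}"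
  by (rule gen_least[OF sub_bt]) auto

lemma bt_gen: "bot \<in> gen X" "top \<in> gen X"
  using subD(1,2)[OF subalgebra_gen] by auto

lemma fin_gen:
  assumes "x \<in> gen X"
  shows "\<exists>F. finite F \<and> F \<subseteq> X \<and> x \<in> gen F"
proof -
  let ?T = "{x. \<exists>F. finite F \<and> F \<subseteq> X \<and> x \<in> gen F}"
  have "subalgebra ?T"
    unfolding subalgebra_def
  proof (intro conjI ballI)
    show "bot \<in> ?T" using bt_gen by blast
    show "top \<in> ?T" using bt_gen by blast
  next
    fix x y assume "x \<in> ?T" "y \<in> ?T"
    then obtain F G where F: "finite F" "F \<subseteq> X" "x \<in> gen F" and G: "finite G" "G \<subseteq> X" "y \<in> gen G"
      by blast
    have "x \<in> gen (F \<union> G)" "y \<in> gen (F \<union> G)" using F G gen_mono[of F "F \<union> G"] gen_mono[of G "F \<union> G"] by auto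
    then have "inf x y \<in> gen (F \<union> G)" "sup x y \<in> gen (F \<union> G)"
      using subD(3,4)[OF subalgebra_gen[of "F \<union> G"]] by blast+
    then show "inf x y \<in> ?T" "sup x y \<in> ?T" using F G by (metis (mono_tags, lifting) Un_subset_iff finite_UnI mem_Collect_eq)+
  next
    fix x assume "x \<in> ?T"
    then show "- x \<in> ?T" using subD(5)[OF subalgebra_gen] by blast
  qed
  moreover have "X \<subseteq> ?T"
  proof
    fix x assume "x \<in> X"
    then show "x \<in> ?T" using gen_sub[of "{x}"] by (intro CollectI exI[of _ "{x}"]) auto
  qed
  ultimately show ?thesis using gen_least assms by blast
qed

lemma E_mono: "\<Gamma> \<subseteq> \<Gamma>' \<Longrightarrow> E S \<Gamma> \<subseteq> E S \<Gamma>'"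
  unfolding E_def by (rule gen_mono) blast

lemma subalgebra_E: "subalgebra (E S \<Gamma>)" unfolding E_def by (rule subalgebra_gen)

lemma S_E: "\<alpha> \<in> \<Gamma> \<Longrightarrow> S \<alpha> \<subseteq> E S \<Gamma>"
  unfolding E_def using gen_sub by blast

lemma E_fin:
  fixes S :: "'o::wellorder \<Rightarrow> 'b::boolean_algebra set"
  assumes "x \<in> E S \<Gamma>"
  shows "x \<in> gen {} \<or> (\<exists>\<beta>\<in>\<Gamma>. x \<in> E S (\<Gamma> \<inter> {..\<beta>}))"
proof -
  obtain F where F: "finite F" "F \<subseteq> \<Union> (S ` \<Gamma>)" "x \<in> gen F"
    using fin_gen assms unfolding E_def by blast
  show ?thesis
  proof (cases "F = {}")
    case True then show ?thesis using F by auto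
  next
    case False
    have "\<forall>f\<in>F. \<exists>\<beta>\<in>\<Gamma>. f \<in> S \<beta>" using F by blast
    then obtain b where b: "\<And>f. f \<in> F \<Longrightarrow> b f \<in> \<Gamma> \<and> f \<in> S (b f)" by metis
    define m where "m = Max (b ` F)"
    have mG: "m \<in> \<Gamma>" using False F(1) b unfolding m_def by (metis (mono_tags, lifting) Max_in empty_is_image finite_imageI image_iff)
    have "F \<subseteq> \<Union> (S ` (\<Gamma> \<inter> {..m}))"
    proof
      fix f assume "f \<in> F"
      then have "b f \<le> m" unfolding m_def using F(1) by auto
      then show "f \<in> \<Union> (S ` (\<Gamma> \<inter> {..m}))" using b \<open>f \<in> F\<close> by auto
    qed
    then have "x \<in> E S (\<Gamma> \<inter> {..m})" unfolding E_def using gen_mono F(3) by blast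
    then show ?thesis using mG by blast
  qed
qed

inductive_set J :: "'b::boolean_algebra set \<Rightarrow> 'b set \<Rightarrow> 'b set" for C S where
  J_bot: "bot \<in> J C S"
| J_cs: "c \<in> C \<Longrightarrow> s \<in> S \<Longrightarrow> inf c s \<in> J C S"
| J_sup: "x \<in> J C S \<Longrightarrow> y \<in> J C S \<Longrightarrow> sup x y \<in> J C S"

lemma J_inf:
  assumes C: "subalgebra C" and S: "subalgebra S"
  shows "x \<in> J C S \<Longrightarrow> y \<in> J C S \<Longrightarrow> inf x y \<in> J C S"
proof (induction x rule: J.induct)
  case J_bot then show ?case by (simp add: J.J_bot)
next
  case (J_cs c s)
  note cs = J_cs
  show ?case using J_cs(3)
  proof (induction y rule: J.induct)
    case J_bot then show ?case by (simp add: J.J_bot)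
  next
    case (J_cs c' s')
    have "inf (inf c s) (inf c' s') = inf (inf c c') (inf s s')" by (simp add: inf_assoc inf_left_commute)
    then show ?case using J_cs cs subD(3)[OF C] subD(3)[OF S] J.J_cs by metis
  next
    case (J_sup x y)
    have "inf (inf c s) (sup x y) = sup (inf (inf c s) x) (inf (inf c s) y)" by (rule inf_sup_distrib1)
    then show ?case using J.J_sup[OF J_sup.IH] by simp
  qed
next
  case (J_sup x1 x2)
  have "inf (sup x1 x2) y = sup (inf x1 y) (inf x2 y)" by (rule inf_sup_distrib2)
  then show ?case using J.J_sup[OF J_sup.IH[OF J_sup.prems]] by simp
qed

lemma J_neg:
  assumes C: "subalgebra C" and S: "subalgebra S"
  shows "x \<in> J C S \<Longrightarrow> - x \<in> J C S"
proof (induction x rule: J.induct)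
  case J_bot
  have "inf top top \<in> J C S" by (rule J.J_cs[OF subD(2)[OF C] subD(2)[OF S]])
  then show ?case by simp
next
  case (J_cs c s)
  have 1: "inf (-c) top \<in> J C S" by (rule J.J_cs[OF subD(5)[OF C J_cs(1)] subD(2)[OF S]])
  have 2: "inf top (-s) \<in> J C S" by (rule J.J_cs[OF subD(2)[OF C] subD(5)[OF S J_cs(2)]])
  have "sup (inf (-c) top) (inf top (-s)) \<in> J C S" by (rule J.J_sup[OF 1 2])
  then show ?case by simp
next
  case (J_sup x y)
  have "inf (- x) (- y) \<in> J C S" by (rule J_inf[OF C S J_sup.IH])
  then show ?case by simp
qed

lemma J_subalg:
  assumes C: "subalgebra C" and S: "subalgebra S"
  shows "subalgebra (J C S)"
proof -
  have t: "top \<in> J C S" using J_neg[OF C S J.J_bot] by simp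
  show ?thesis unfolding subalgebra_def
  proof (intro conjI ballI)
    show "bot \<in> J C S" by (rule J.J_bot)
    show "top \<in> J C S" by (rule t)
  next
    fix x y assume "x \<in> J C S" "y \<in> J C S"
    then show "inf x y \<in> J C S" "sup x y \<in> J C S" by (rule J_inf[OF C S], rule J.J_sup)
  next
    fix x assume "x \<in> J C S"
    then show "- x \<in> J C S" by (rule J_neg[OF C S])
  qed
qed

lemma J_incl:
  assumes C: "subalgebra C" and S: "subalgebra S"
  shows "C \<union> S \<subseteq> J C S"
proof
  fix x assume "x \<in> C \<union> S"
  then show "x \<in> J C S"
  proof
    assume "x \<in> C" then show ?thesis using J.J_cs[of x C "top" S] subD(2)[OF S] by simp
  next
    assume "x \<in> S" then show ?thesis using J.J_cs[of "top" C x S] subD(2)[OF C] by simp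
  qed
qed




lemma tsfD:
  assumes "tightly_sigma_filtered B R S"
  shows "subalgebra (B \<alpha>)" "mono B" "pushout (R \<alpha>) (B \<alpha>) (S \<alpha>) (next_stage B \<alpha>)"
  using assms unfolding tightly_sigma_filtered_def by auto

lemma S_le_B:
  fixes B R S :: "'o::wellorder \<Rightarrow> 'b::boolean_algebra set"
  assumes tsf: "tightly_sigma_filtered B R S" and lt: "\<beta> < \<alpha>"
  shows "S \<beta> \<subseteq> B \<alpha>"
proof -
  have ns: "next_stage B \<beta> = B (LEAST \<gamma>. \<beta> < \<gamma>)" unfolding next_stage_def using lt by auto
  have "(LEAST \<gamma>. \<beta> < \<gamma>) \<le> \<alpha>" using lt by (rule Least_le)
  then have "B (LEAST \<gamma>. \<beta> < \<gamma>) \<subseteq> B \<alpha>" using tsfD(2)[OF tsf] by (simp add: monoD)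
  moreover have "S \<beta> \<subseteq> next_stage B \<beta>" using tsfD(3)[OF tsf, of \<beta>] unfolding pushout_def by auto
  ultimately show ?thesis using ns by auto
qed

lemma E_below_B:
  fixes B R S :: "'o::wellorder \<Rightarrow> 'b::boolean_algebra set"
  assumes tsf: "tightly_sigma_filtered B R S"
  shows "E S (\<Gamma> \<inter> {..<\<alpha>}) \<subseteq> B \<alpha>"
  unfolding E_def using S_le_B[OF tsf] by (intro gen_least tsfD(1)[OF tsf]) auto

lemma subalgebra_S:
  assumes tsf: "tightly_sigma_filtered B R S"
  shows "subalgebra (S \<alpha>)"
  using tsfD(3)[OF tsf, of \<alpha>] unfolding pushout_def by auto

lemma E_step:
  fixes B R S :: "'o::wellorder \<Rightarrow> 'b::boolean_algebra set"
  assumes tsf: "tightly_sigma_filtered B R S" and a: "\<alpha> \<in> \<Gamma>"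
  shows "E S (\<Gamma> \<inter> {..\<alpha>}) \<subseteq> J (E S (\<Gamma> \<inter> {..<\<alpha>})) (S \<alpha>)"
proof -
  have sub: "subalgebra (J (E S (\<Gamma> \<inter> {..<\<alpha>})) (S \<alpha>))"
    by (rule J_subalg[OF subalgebra_E subalgebra_S[OF tsf]])
  have inc: "E S (\<Gamma> \<inter> {..<\<alpha>}) \<union> S \<alpha> \<subseteq> J (E S (\<Gamma> \<inter> {..<\<alpha>})) (S \<alpha>)"
    by (rule J_incl[OF subalgebra_E subalgebra_S[OF tsf]])
  have "\<Union> (S ` (\<Gamma> \<inter> {..\<alpha>})) \<subseteq> E S (\<Gamma> \<inter> {..<\<alpha>}) \<union> S \<alpha>"
  proof
    fix x assume "x \<in> \<Union> (S ` (\<Gamma> \<inter> {..\<alpha>}))"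
    then obtain \<beta> where b: "\<beta> \<in> \<Gamma>" "\<beta> \<le> \<alpha>" "x \<in> S \<beta>" by auto
    show "x \<in> E S (\<Gamma> \<inter> {..<\<alpha>}) \<union> S \<alpha>"
    proof (cases "\<beta> = \<alpha>")
      case True then show ?thesis using b by auto
    next
      case False then have "\<beta> \<in> \<Gamma> \<inter> {..<\<alpha>}" using b by auto
      then have "S \<beta> \<subseteq> E S (\<Gamma> \<inter> {..<\<alpha>})" by (rule S_E)
      then show ?thesis using b(3) by auto
    qed
  qed
  then have "\<Union> (S ` (\<Gamma> \<inter> {..\<alpha>})) \<subseteq> J (E S (\<Gamma> \<inter> {..<\<alpha>})) (S \<alpha>)" using inc by (rule subset_trans)
  then show ?thesis unfolding E_def[of S "\<Gamma> \<inter> {..\<alpha>}"] by (rule gen_least[OF sub])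
qed

lemma E_nstep:
  fixes \<alpha> :: "'o::wellorder"
  assumes "\<alpha> \<notin> \<Gamma>"
  shows "E S (\<Gamma> \<inter> {..\<alpha>}) = E S (\<Gamma> \<inter> {..<\<alpha>})"
proof -
  have "\<Gamma> \<inter> {..\<alpha>} = \<Gamma> \<inter> {..<\<alpha>}" using assms by (auto simp: le_less)
  then show ?thesis by simp
qed

lemma satD':
  assumes "saturated R S \<Gamma>" "\<alpha> \<in> \<Gamma>"
  shows "R \<alpha> \<subseteq> E S (\<Gamma> \<inter> {..<\<alpha>})"
  using assms unfolding saturated_def by auto

lemma comm:
  fixes B R S :: "'o::wellorder \<Rightarrow> 'b::boolean_algebra set"
  assumes tsf: "tightly_sigma_filtered B R S"
    and c: "c \<in> B \<alpha>" and s: "s \<in> S \<alpha>" and cs: "inf c s = bot"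
  shows "\<exists>t\<in>R \<alpha>. s \<le> t \<and> inf c t = bot"
proof -
  have po: "commute (B \<alpha>) (S \<alpha>)" "B \<alpha> \<inter> S \<alpha> = R \<alpha>"
    using tsfD(3)[OF tsf, of \<alpha>] unfolding pushout_def by auto
  then obtain b1 b2 where b: "b1 \<in> R \<alpha>" "b2 \<in> R \<alpha>" "c \<le> b1" "s \<le> b2" "inf b1 b2 = bot"
    using c s cs unfolding commute_def by metis
  have "inf c b2 \<le> inf b1 b2" using inf_mono[OF b(3) order_refl] .
  then have "inf c b2 = bot" using b(5) by (simp add: bot_unique)
  then show ?thesis using b by blast
qed

definition sepd :: "('o \<Rightarrow> 'b::boolean_algebra set) \<Rightarrow> 'o set \<Rightarrow> 'b \<Rightarrow> 'b \<Rightarrow> bool" where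
  "sepd S \<Delta> x y \<longleftrightarrow> (\<exists>d\<in>E S \<Delta>. x \<le> d \<and> inf d y = bot)"

lemma sepd_sym: "sepd S \<Delta> x y \<Longrightarrow> sepd S \<Delta> y x"
  unfolding sepd_def
proof -
  assume "\<exists>d\<in>E S \<Delta>. x \<le> d \<and> inf d y = bot"
  then obtain d where d: "d \<in> E S \<Delta>" "x \<le> d" "inf d y = bot" by blast
  have "- d \<in> E S \<Delta>" using subD(5)[OF subalgebra_E d(1)] .
  moreover have "y \<le> - d" using d(3) by (simp add: inf_shunt[symmetric] inf_commute)
  moreover have "inf (- d) x = bot"
  proof -
    have "inf (- d) x \<le> inf (- d) d" using inf_mono[OF order_refl d(2)] .
    then show ?thesis by (simp add: bot_unique)
  qed
  ultimately show "\<exists>d\<in>E S \<Delta>. y \<le> d \<and> inf d x = bot" by blast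
qed

lemma sepd_triv:
  assumes "x \<in> gen {} \<or> y \<in> gen {}" "inf x y = bot"
  shows "sepd S \<Delta> x y"
proof -
  have bt: "bot \<in> E S \<Delta>" "top \<in> E S \<Delta>" unfolding E_def using bt_gen by auto
  from assms(1) gen_empty have "x \<in> {bot, top} \<or> y \<in> {bot, top}" by blast
  then consider "x = bot" | "y = bot" | "x = top" | "y = top" by blast
  then show ?thesis
  proof cases
    case 1 then show ?thesis unfolding sepd_def using bt by (intro bexI[of _ bot]) auto
  next
    case 2 then show ?thesis unfolding sepd_def using bt by (intro bexI[of _ top]) auto
  next
    case 3 then have "y = bot" using assms(2) by simp
    then show ?thesis unfolding sepd_def using bt by (intro bexI[of _ top]) auto
  next
    case 4 then have "x = bot" using assms(2) by simp
    then show ?thesis unfolding sepd_def using bt by (intro bexI[of _ bot]) auto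
  qed
qed

definition Qst :: "('o::wellorder \<Rightarrow> 'b::boolean_algebra set) \<Rightarrow> 'o set \<Rightarrow> 'o set \<Rightarrow> 'o set \<Rightarrow> 'o \<Rightarrow> bool" where
  "Qst S \<Delta> G1 G2 \<beta> \<longleftrightarrow> (\<forall>a1\<in>E S (G1 \<inter> {..\<beta>}). \<forall>a2\<in>E S (G2 \<inter> {..\<beta>}). inf a1 a2 = bot \<longrightarrow> sepd S \<Delta> a1 a2)"

lemma Qst_sym: "Qst S \<Delta> G1 G2 \<beta> \<Longrightarrow> Qst S \<Delta> G2 G1 \<beta>"
  unfolding Qst_def
proof (intro ballI impI)
  assume Q: "\<forall>a1\<in>E S (G1 \<inter> {..\<beta>}). \<forall>a2\<in>E S (G2 \<inter> {..\<beta>}). inf a1 a2 = bot \<longrightarrow> sepd S \<Delta> a1 a2"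
  fix a1 a2 assume a1: "a1 \<in> E S (G2 \<inter> {..\<beta>})" and a2: "a2 \<in> E S (G1 \<inter> {..\<beta>})" and d: "inf a1 a2 = bot"
  have "inf a2 a1 = bot" using d by (simp add: inf.commute)
  then have "sepd S \<Delta> a2 a1" using Q a1 a2 by blast
  then show "sepd S \<Delta> a1 a2" by (rule sepd_sym)
qed

lemma Qs_from:
  fixes S :: "'o::wellorder \<Rightarrow> 'b::boolean_algebra set"
  assumes Q: "\<forall>\<beta>\<in>X. Qst S \<Delta> G1 G2 \<beta>"
    and a1: "a1 \<in> E S (G1 \<inter> X)" and a2: "a2 \<in> E S (G2 \<inter> X)" and d: "inf a1 a2 = bot"
  shows "sepd S \<Delta> a1 a2"
proof -
  consider "a1 \<in> gen {} \<or> a2 \<in> gen {}" | b1 b2 where "b1 \<in> G1 \<inter> X" "a1 \<in> E S ((G1 \<inter> X) \<inter> {..b1})"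
      "b2 \<in> G2 \<inter> X" "a2 \<in> E S ((G2 \<inter> X) \<inter> {..b2})"
    using E_fin[OF a1] E_fin[OF a2] by blast
  then show ?thesis
  proof cases
    case 1 then show ?thesis using sepd_triv d by blast
  next
    case 2
    define m where "m = max b1 b2"
    have "m \<in> X" unfolding m_def using 2 by (auto simp: max_def)
    have s1: "(G1 \<inter> X) \<inter> {..b1} \<subseteq> G1 \<inter> {..m}" unfolding m_def by (auto simp: le_max_iff_disj)
    have s2: "(G2 \<inter> X) \<inter> {..b2} \<subseteq> G2 \<inter> {..m}" unfolding m_def by (auto simp: le_max_iff_disj)
    have "a1 \<in> E S (G1 \<inter> {..m})" using 2 E_mono[OF s1, of S] by blast
    moreover have "a2 \<in> E S (G2 \<inter> {..m})" using 2 E_mono[OF s2, of S] by blast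
    ultimately show ?thesis using Q \<open>m \<in> X\<close> d unfolding Qst_def by blast
  qed
qed

lemma M_lemma:
  fixes B R S :: "'o::wellorder \<Rightarrow> 'b::boolean_algebra set"
  assumes tsf: "tightly_sigma_filtered B R S" and sat1: "saturated R S G1"
    and Q: "\<forall>\<beta>\<in>{..<\<alpha>}. Qst S \<Delta> G1 G2 \<beta>"
    and a1: "a1 \<in> E S (G1 \<inter> {..\<alpha>})" and a2: "a2 \<in> E S (G2 \<inter> {..<\<alpha>})" and d: "inf a1 a2 = bot"
  shows "sepd S \<Delta> a1 a2"
proof (cases "\<alpha> \<in> G1")
  case False
  have a1': "a1 \<in> E S (G1 \<inter> {..<\<alpha>})" using a1 unfolding E_nstep[OF False] .
  show ?thesis by (rule Qs_from[OF Q a1' a2 d])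
next
  case True
  let ?C = "E S (G1 \<inter> {..<\<alpha>})"
  have a1J: "a1 \<in> J ?C (S \<alpha>)" using E_step[OF tsf True] a1 by auto
  have a2B: "a2 \<in> B \<alpha>" using E_below_B[OF tsf] a2 by auto
  have "x \<in> J ?C (S \<alpha>) \<Longrightarrow> inf x a2 = bot \<Longrightarrow> sepd S \<Delta> x a2" for x
  proof (induction x rule: J.induct)
    case J_bot
    then show ?case unfolding sepd_def using bt_gen unfolding E_def by (intro bexI[of _ bot]) auto
  next
    case (J_cs c s)
    have cB: "inf c a2 \<in> B \<alpha>" using J_cs(1) E_below_B[OF tsf] a2B subD(3)[OF tsfD(1)[OF tsf]] by blast
    have "inf (inf c a2) s = bot" using J_cs(3) by (simp add: inf_assoc inf_left_commute inf_commute)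
    then obtain t where t: "t \<in> R \<alpha>" "s \<le> t" "inf (inf c a2) t = bot" using comm[OF tsf cB J_cs(2)] by blast
    have tC: "t \<in> ?C" using satD'[OF sat1 True] t(1) by auto
    have ctC: "inf c t \<in> ?C" using subD(3)[OF subalgebra_E J_cs(1) tC] .
    have "inf (inf c t) a2 = bot" using t(3) by (simp add: inf_assoc inf_left_commute inf_commute)
    then have "sepd S \<Delta> (inf c t) a2" using Qs_from[OF Q ctC a2] by auto
    then obtain e where e: "e \<in> E S \<Delta>" "inf c t \<le> e" "inf e a2 = bot" unfolding sepd_def by blast
    have "inf c s \<le> inf c t" using inf_mono[OF order_refl t(2)] .
    then show ?case unfolding sepd_def using e by (meson order_trans)
  next
    case (J_sup x y)
    have "inf x a2 = bot" "inf y a2 = bot" using J_sup(5) by (simp_all add: inf_sup_distrib2)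
    then obtain dx dy where dx: "dx \<in> E S \<Delta>" "x \<le> dx" "inf dx a2 = bot"
      and dy: "dy \<in> E S \<Delta>" "y \<le> dy" "inf dy a2 = bot" using J_sup unfolding sepd_def by blast
    have "sup dx dy \<in> E S \<Delta>" using subD(4)[OF subalgebra_E dx(1) dy(1)] .
    moreover have "sup x y \<le> sup dx dy" using sup_mono[OF dx(2) dy(2)] .
    moreover have "inf (sup dx dy) a2 = bot" using dx dy by (simp add: inf_sup_distrib2)
    ultimately show ?case unfolding sepd_def by blast
  qed
  then show ?thesis using a1J d by blast
qed

lemma Q_step:
  fixes B R S :: "'o::wellorder \<Rightarrow> 'b::boolean_algebra set"
  assumes tsf: "tightly_sigma_filtered B R S" and sat1: "saturated R S G1" and sat2: "saturated R S G2"
    and int: "G1 \<inter> G2 \<subseteq> \<Delta>"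
    and Q: "\<forall>\<beta><\<alpha>. Qst S \<Delta> G1 G2 \<beta>"
  shows "Qst S \<Delta> G1 G2 \<alpha>"
  unfolding Qst_def
proof (intro ballI impI)
  fix a1 a2 assume a1: "a1 \<in> E S (G1 \<inter> {..\<alpha>})" and a2: "a2 \<in> E S (G2 \<inter> {..\<alpha>})" and d: "inf a1 a2 = bot"
  have Q1: "\<forall>\<beta>\<in>{..<\<alpha>}. Qst S \<Delta> G1 G2 \<beta>" using Q by auto
  have Q2: "\<forall>\<beta>\<in>{..<\<alpha>}. Qst S \<Delta> G2 G1 \<beta>" using Q by (simp add: Qst_sym)
  show "sepd S \<Delta> a1 a2"
  proof (cases "\<alpha> \<in> G2")
    case False
    have a2': "a2 \<in> E S (G2 \<inter> {..<\<alpha>})" using a2 unfolding E_nstep[OF False] .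
    show ?thesis by (rule M_lemma[OF tsf sat1 Q1 a1 a2' d])
  next
    case T2: True
    show ?thesis
    proof (cases "\<alpha> \<in> G1")
      case False
      have a1': "a1 \<in> E S (G1 \<inter> {..<\<alpha>})" using a1 unfolding E_nstep[OF False] .
      have d': "inf a2 a1 = bot" using d by (simp add: inf.commute)
      have "sepd S \<Delta> a2 a1" by (rule M_lemma[OF tsf sat2 Q2 a2 a1' d'])
      then show ?thesis by (rule sepd_sym)
    next
      case T1: True
      have aD: "\<alpha> \<in> \<Delta>" using T1 T2 int by auto
      let ?C = "E S (G2 \<inter> {..<\<alpha>})"
      have a2J: "a2 \<in> J ?C (S \<alpha>)" using E_step[OF tsf T2] a2 by auto
      have "y \<in> J ?C (S \<alpha>) \<Longrightarrow> inf a1 y = bot \<Longrightarrow> sepd S \<Delta> a1 y" for y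
      proof (induction y rule: J.induct)
        case J_bot
        then show ?case unfolding sepd_def using bt_gen unfolding E_def by (intro bexI[of _ top]) auto
      next
        case (J_cs e u)
        have uE: "u \<in> E S (G1 \<inter> {..\<alpha>})" using S_E[of \<alpha> "G1 \<inter> {..\<alpha>}" S] T1 J_cs(2) by auto
        have a1u: "inf a1 u \<in> E S (G1 \<inter> {..\<alpha>})" using subD(3)[OF subalgebra_E a1 uE] .
        have "inf (inf a1 u) e = bot" using J_cs(3) by (simp add: inf_assoc inf_left_commute inf_commute)
        then obtain d' where d': "d' \<in> E S \<Delta>" "inf a1 u \<le> d'" "inf d' e = bot"
          using M_lemma[OF tsf sat1 Q1 a1u J_cs(1)] unfolding sepd_def by blast
        have uD: "u \<in> E S \<Delta>" using S_E[of \<alpha> \<Delta> S] aD J_cs(2) by auto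
        have dd: "sup d' (- u) \<in> E S \<Delta>" using subD(4,5)[OF subalgebra_E] d'(1) uD by blast
        have "a1 = sup (inf a1 u) (inf a1 (-u))" by (simp add: inf_sup_distrib1[symmetric])
        also have "\<dots> \<le> sup d' (- u)" using d'(2) by (simp add: le_supI1 le_supI2)
        finally have le: "a1 \<le> sup d' (- u)" .
        have "inf (sup d' (- u)) (inf e u) = sup (inf d' (inf e u)) (inf (-u) (inf e u))"
          by (simp add: inf_sup_distrib2)
        also have "\<dots> = bot"
        proof -
          have "inf d' (inf e u) = inf (inf d' e) u" by (simp add: inf_assoc)
          then have 1: "inf d' (inf e u) = bot" using d'(3) by simp
          have 2: "inf (-u) (inf e u) = bot" by (simp add: inf_left_commute[of "-u"])
          show ?thesis using 1 2 by simp
        qed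
        finally show ?case unfolding sepd_def using dd le by blast
      next
        case (J_sup x y)
        have "inf a1 x = bot" "inf a1 y = bot" using J_sup(5) by (simp_all add: inf_sup_distrib1)
        then obtain dx dy where dx: "dx \<in> E S \<Delta>" "a1 \<le> dx" "inf dx x = bot"
          and dy: "dy \<in> E S \<Delta>" "a1 \<le> dy" "inf dy y = bot" using J_sup unfolding sepd_def by blast
        have "inf dx dy \<in> E S \<Delta>" using subD(3)[OF subalgebra_E dx(1) dy(1)] .
        moreover have "a1 \<le> inf dx dy" using dx dy by simp
        moreover have "inf (inf dx dy) (sup x y) = bot"
        proof -
          have "inf (inf dx dy) x \<le> inf dx x" using inf_mono[OF inf_le1 order_refl] .
          then have 1: "inf (inf dx dy) x = bot" using dx(3) by (simp add: bot_unique)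
          have "inf (inf dx dy) y \<le> inf dy y" using inf_mono[OF inf_le2 order_refl] .
          then have 2: "inf (inf dx dy) y = bot" using dy(3) by (simp add: bot_unique)
          show ?thesis using 1 2 by (simp add: inf_sup_distrib1)
        qed
        ultimately show ?case unfolding sepd_def by blast
      qed
      then show ?thesis using a2J d by blast
    qed
  qed
qed

lemma L2:
  fixes B R S :: "'o::wellorder \<Rightarrow> 'b::boolean_algebra set"
  assumes tsf: "tightly_sigma_filtered B R S" and sat1: "saturated R S G1" and sat2: "saturated R S G2"
    and int: "G1 \<inter> G2 \<subseteq> \<Delta>"
    and a1: "a1 \<in> E S G1" and a2: "a2 \<in> E S G2" and d: "inf a1 a2 = bot"
  shows "\<exists>e\<in>E S \<Delta>. a1 \<le> e \<and> inf e a2 = bot"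
proof -
  have "Qst S \<Delta> G1 G2 \<alpha>" for \<alpha>
  proof (induction \<alpha> rule: less_induct)
    case (less \<alpha>)
    then show ?case using Q_step[OF tsf sat1 sat2 int] by blast
  qed
  then have "\<forall>\<beta>\<in>UNIV. Qst S \<Delta> G1 G2 \<beta>" by blast
  from Qs_from[OF this] a1 a2 d show ?thesis unfolding sepd_def by auto
qed




fun bsubst :: "nat \<Rightarrow> bpoly \<Rightarrow> bpoly \<Rightarrow> bpoly" where
  "bsubst k Q (Var i) = (if i = k then Q else Var i)"
| "bsubst k Q Zero = Zero"
| "bsubst k Q One = One"
| "bsubst k Q (Meet p q) = Meet (bsubst k Q p) (bsubst k Q q)"
| "bsubst k Q (Join p q) = Join (bsubst k Q p) (bsubst k Q q)"
| "bsubst k Q (Neg p) = Neg (bsubst k Q p)"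

lemma beval_subst: "beval (bsubst k Q P) v = beval P (v(k := beval Q v))"
  by (induction P) auto

lemma beval_cong: "(\<forall>i\<in>bvars P. v i = w i) \<Longrightarrow> beval P v = beval P w"
  by (induction P) auto

lemma finite_bvars: "finite (bvars P)"
  by (induction P) auto

lemma beval_in: "subalgebra A \<Longrightarrow> (\<forall>i. v i \<in> A) \<Longrightarrow> beval P v \<in> A"
  by (induction P) (auto simp: subalgebra_def)

lemma split_eq:
  fixes x p q :: "'b::boolean_algebra"
  assumes "inf x p = inf x q" "inf (-x) p = inf (-x) q"
  shows "p = q"
proof -
  have "p = inf (sup x (-x)) p" by simp
  also have "\<dots> = sup (inf x p) (inf (-x) p)" by (rule inf_sup_distrib2)
  also have "\<dots> = sup (inf x q) (inf (-x) q)" using assms by simp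
  also have "\<dots> = inf (sup x (-x)) q" by (rule inf_sup_distrib2[symmetric])
  finally show ?thesis by simp
qed

lemma hx:
  fixes x :: "'b::boolean_algebra"
  shows "inf x (sup (inf x a) (inf (-x) b)) = inf x a"
proof -
  have "inf x (sup (inf x a) (inf (-x) b)) = sup (inf x (inf x a)) (inf x (inf (-x) b))" by (rule inf_sup_distrib1)
  also have "inf x (inf x a) = inf x a" by (rule inf.left_idem)
  also have "inf x (inf (-x) b) = bot" by simp
  finally show ?thesis by simp
qed

lemma hnx:
  fixes x :: "'b::boolean_algebra"
  shows "inf (-x) (sup (inf x a) (inf (-x) b)) = inf (-x) b"
proof -
  have "inf (-x) (sup (inf x a) (inf (-x) b)) = sup (inf (-x) (inf x a)) (inf (-x) (inf (-x) b))" by (rule inf_sup_distrib1)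
  also have "inf (-x) (inf (-x) b) = inf (-x) b" by (rule inf.left_idem)
  also have "inf (-x) (inf x a) = bot" by simp
  finally show ?thesis by simp
qed

lemma inf_dist_self:
  fixes x :: "'b::boolean_algebra"
  shows "inf x (inf p q) = inf (inf x p) (inf x q)"
  by (metis inf.left_commute inf.left_idem inf.assoc)

lemma meet_sh:
  fixes x :: "'b::boolean_algebra"
  shows "inf (sup (inf x a1) (inf (-x) a0)) (sup (inf x b1) (inf (-x) b0)) = sup (inf x (inf a1 b1)) (inf (-x) (inf a0 b0))"
    (is "inf ?A ?B = ?R")
proof (rule split_eq[of x])
  have "inf x (inf ?A ?B) = inf (inf x ?A) (inf x ?B)" by (rule inf_dist_self)
  also have "\<dots> = inf (inf x a1) (inf x b1)" by (simp only: hx)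
  also have "\<dots> = inf x (inf a1 b1)" by (rule inf_dist_self[symmetric])
  also have "\<dots> = inf x ?R" by (simp only: hx)
  finally show "inf x (inf ?A ?B) = inf x ?R" .
  have "inf (-x) (inf ?A ?B) = inf (inf (-x) ?A) (inf (-x) ?B)" by (rule inf_dist_self)
  also have "\<dots> = inf (inf (-x) a0) (inf (-x) b0)" by (simp only: hnx)
  also have "\<dots> = inf (-x) (inf a0 b0)" by (rule inf_dist_self[symmetric])
  also have "\<dots> = inf (-x) ?R" by (simp only: hnx)
  finally show "inf (-x) (inf ?A ?B) = inf (-x) ?R" .
qed

lemma join_sh:
  fixes x :: "'b::boolean_algebra"
  shows "sup (sup (inf x a1) (inf (-x) a0)) (sup (inf x b1) (inf (-x) b0)) = sup (inf x (sup a1 b1)) (inf (-x) (sup a0 b0))"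
    (is "sup ?A ?B = ?R")
proof (rule split_eq[of x])
  have "inf x (sup ?A ?B) = sup (inf x ?A) (inf x ?B)" by (rule inf_sup_distrib1)
  also have "\<dots> = sup (inf x a1) (inf x b1)" by (simp only: hx)
  also have "\<dots> = inf x (sup a1 b1)" by (rule inf_sup_distrib1[symmetric])
  also have "\<dots> = inf x ?R" by (simp only: hx)
  finally show "inf x (sup ?A ?B) = inf x ?R" .
  have "inf (-x) (sup ?A ?B) = sup (inf (-x) ?A) (inf (-x) ?B)" by (rule inf_sup_distrib1)
  also have "\<dots> = sup (inf (-x) a0) (inf (-x) b0)" by (simp only: hnx)
  also have "\<dots> = inf (-x) (sup a0 b0)" by (rule inf_sup_distrib1[symmetric])
  also have "\<dots> = inf (-x) ?R" by (simp only: hnx)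
  finally show "inf (-x) (sup ?A ?B) = inf (-x) ?R" .
qed

lemma neg_sh:
  fixes x :: "'b::boolean_algebra"
  shows "- (sup (inf x a1) (inf (-x) a0)) = sup (inf x (- a1)) (inf (-x) (- a0))"
proof (rule compl_unique)
  show "inf (sup (inf x a1) (inf (-x) a0)) (sup (inf x (- a1)) (inf (-x) (- a0))) = bot"
    by (simp only: meet_sh inf_compl_bot inf_bot_right sup_bot_left)
  show "sup (sup (inf x a1) (inf (-x) a0)) (sup (inf x (- a1)) (inf (-x) (- a0))) = top"
    by (simp only: join_sh sup_compl_top inf_top_right)
qed

lemma shannon:
  fixes v :: "nat \<Rightarrow> 'b::boolean_algebra"
  shows "beval P v = sup (inf (v k) (beval P (v(k:=top)))) (inf (- v k) (beval P (v(k:=bot))))"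
proof (induction P)
  case (Var i)
  show ?case
  proof (cases "i = k")
    case True then show ?thesis by simp
  next
    case False
    have "v i = inf (sup (v k) (- v k)) (v i)" by simp
    also have "\<dots> = sup (inf (v k) (v i)) (inf (- v k) (v i))" by (rule inf_sup_distrib2)
    finally show ?thesis using False by simp
  qed
next
  case (Meet p q)
  then show ?case by (simp only: beval.simps meet_sh)
next
  case (Join p q)
  then show ?case by (simp only: beval.simps join_sh)
next
  case (Neg p)
  then show ?case by (simp only: beval.simps neg_sh)
qed auto




lemma sat_union:
  assumes "saturated R S \<Delta>" "\<forall>i\<in>V. saturated R S (\<Gamma> i)"
  shows "saturated R S (\<Delta> \<union> \<Union> (\<Gamma> ` V))"
  unfolding saturated_def
proof
  fix \<gamma> assume g: "\<gamma> \<in> \<Delta> \<union> \<Union> (\<Gamma> ` V)"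
  show "R \<gamma> \<subseteq> E S ((\<Delta> \<union> \<Union> (\<Gamma> ` V)) \<inter> {..<\<gamma>})"
  proof (cases "\<gamma> \<in> \<Delta>")
    case True
    then have "R \<gamma> \<subseteq> E S (\<Delta> \<inter> {..<\<gamma>})" using assms(1) unfolding saturated_def by auto
    also have "\<dots> \<subseteq> E S ((\<Delta> \<union> \<Union> (\<Gamma> ` V)) \<inter> {..<\<gamma>})" by (rule E_mono) auto
    finally show ?thesis .
  next
    case False
    then obtain i where i: "i \<in> V" "\<gamma> \<in> \<Gamma> i" using g by auto
    then have "R \<gamma> \<subseteq> E S (\<Gamma> i \<inter> {..<\<gamma>})" using assms(2) unfolding saturated_def by auto
    also have "\<dots> \<subseteq> E S ((\<Delta> \<union> \<Union> (\<Gamma> ` V)) \<inter> {..<\<gamma>})" using i by (intro E_mono) auto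
    finally show ?thesis .
  qed
qed

lemma G_lemma:
  fixes B R S :: "'o::wellorder \<Rightarrow> 'b::boolean_algebra set" and \<Gamma> :: "nat \<Rightarrow> 'o set"
  assumes tsf: "tightly_sigma_filtered B R S" and satD: "saturated R S \<Delta>" and fin: "finite V"
  shows "(\<forall>i\<in>V. saturated R S (\<Gamma> i)) \<Longrightarrow> (\<forall>i\<in>V. \<forall>j\<in>V. i \<noteq> j \<longrightarrow> \<Gamma> i \<inter> \<Gamma> j \<subseteq> \<Delta>) \<Longrightarrow>
    (\<forall>i\<in>V. a i \<in> E S (\<Gamma> i)) \<Longrightarrow> (\<forall>i. i \<notin> V \<longrightarrow> a i \<in> E S \<Delta>) \<Longrightarrow> beval P a = bot \<Longrightarrow>
    \<exists>rm rp. (\<forall>i\<in>V. rm i \<in> E S \<Delta> \<and> rp i \<in> E S \<Delta> \<and> rm i \<le> a i \<and> a i \<le> rp i) \<and>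
      (\<forall>\<epsilon>. beval P (\<lambda>i. if i \<in> V then (if \<epsilon> i then rp i else rm i) else a i) = bot)"
  using fin
proof (induction V arbitrary: P a rule: finite_induct)
  case empty
  then show ?case by auto
next
  case (insert k V)
  note satV = insert.prems(1) and intV = insert.prems(2) and aV = insert.prems(3)
    and aO = insert.prems(4) and P0 = insert.prems(5)
  have bt: "bot \<in> E S X" "top \<in> E S X" for X unfolding E_def using bt_gen by auto
  define G' where "G' = \<Delta> \<union> \<Union> (\<Gamma> ` V)"
  have satV': "\<forall>i\<in>V. saturated R S (\<Gamma> i)" using satV by simp
  have satG': "saturated R S G'" unfolding G'_def using sat_union[OF satD satV'] .
  have satk: "saturated R S (\<Gamma> k)" using satV by auto
  have intk: "\<Gamma> k \<inter> G' \<subseteq> \<Delta>"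
  proof
    fix x assume x: "x \<in> \<Gamma> k \<inter> G'"
    show "x \<in> \<Delta>"
    proof (cases "x \<in> \<Delta>")
      case False
      then obtain i where i: "i \<in> V" "x \<in> \<Gamma> i" using x unfolding G'_def by auto
      have "k \<noteq> i" using i insert.hyps(2) by auto
      then have "\<Gamma> k \<inter> \<Gamma> i \<subseteq> \<Delta>" using intV i(1) by simp
      then show ?thesis using x i by auto
    qed
  qed
  have akE: "a k \<in> E S (\<Gamma> k)" using aV by auto
  define A1 where "A1 = beval P (a(k:=top))"
  define A0 where "A0 = beval P (a(k:=bot))"
  have inG': "A1 \<in> E S G'" "A0 \<in> E S G'"
  proof -
    have DG: "E S \<Delta> \<subseteq> E S G'" unfolding G'_def by (rule E_mono) auto
    have "a i \<in> E S G'" if "i \<noteq> k" for i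
    proof (cases "i \<in> V")
      case True
      then have "E S (\<Gamma> i) \<subseteq> E S G'" unfolding G'_def by (intro E_mono) auto
      then show ?thesis using aV True by auto
    next
      case False then show ?thesis using aO that DG by auto
    qed
    then have t1: "\<forall>i. (a(k:=top)) i \<in> E S G'" and t0: "\<forall>i. (a(k:=bot)) i \<in> E S G'" using bt by auto
    show "A1 \<in> E S G'" unfolding A1_def by (rule beval_in[OF subalgebra_E t1])
    show "A0 \<in> E S G'" unfolding A0_def by (rule beval_in[OF subalgebra_E t0])
  qed
  have "sup (inf (a k) A1) (inf (- a k) A0) = bot" using P0 shannon[of P a k] unfolding A1_def A0_def by simp
  then have d1: "inf (a k) A1 = bot" and d0: "inf (- a k) A0 = bot" by (simp_all add: sup_eq_bot_iff)
  obtain e1 where e1: "e1 \<in> E S \<Delta>" "a k \<le> e1" "inf e1 A1 = bot"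
    using L2[OF tsf satk satG' intk akE inG'(1) d1] by blast
  obtain e0 where e0: "e0 \<in> E S \<Delta>" "- a k \<le> e0" "inf e0 A0 = bot"
    using L2[OF tsf satk satG' intk subD(5)[OF subalgebra_E akE] inG'(2) d0] by blast
  define m where "m = Max (insert k (V \<union> bvars P))"
  have finM: "finite (insert k (V \<union> bvars P))" using insert.hyps(1) finite_bvars by auto
  have mge: "i \<le> m" if "i \<in> insert k (V \<union> bvars P)" for i unfolding m_def using finM that by auto
  define k1 where "k1 = Suc m"
  define k0 where "k0 = Suc (Suc m)"
  have nk: "\<not> (Suc m \<le> m)" "\<not> (Suc (Suc m) \<le> m)" by auto
  have fr1: "k1 \<noteq> k" "k1 \<notin> V" "k1 \<notin> bvars P" unfolding k1_def using mge[of "Suc m"] nk by auto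
  have fr0: "k0 \<noteq> k" "k0 \<notin> V" "k0 \<notin> bvars P" "k0 \<noteq> k1" unfolding k0_def k1_def using mge[of "Suc (Suc m)"] nk by auto
  have fr1': "k1 \<noteq> k" "k1 \<notin> V" "k1 \<notin> bvars P" using fr1 by auto
  define P' where "P' = Join (Meet (Var k1) (bsubst k One P)) (Meet (Var k0) (bsubst k Zero P))"
  define a' where "a' = a(k := bot, k1 := e1, k0 := e0)"
  have ev: "beval P' w = sup (inf (w k1) (beval P (w(k:=top)))) (inf (w k0) (beval P (w(k:=bot))))" for w :: "nat \<Rightarrow> 'b"
    unfolding P'_def by (simp add: beval_subst)
  have IHa: "\<forall>i\<in>V. a' i \<in> E S (\<Gamma> i)" using aV fr1 fr0 insert.hyps(2) unfolding a'_def by auto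
  have IHb: "\<forall>i. i \<notin> V \<longrightarrow> a' i \<in> E S \<Delta>" using aO e1 e0 bt unfolding a'_def by auto
  have c1: "beval P (a'(k:=top)) = A1" unfolding A1_def a'_def using fr1 fr0
    by (intro beval_cong) auto
  have c0: "beval P (a'(k:=bot)) = A0" unfolding A0_def a'_def using fr1 fr0
    by (intro beval_cong) auto
  have IHc: "beval P' a' = bot" using ev[of a'] c1 c0 e1(3) e0(3) fr0(4) unfolding a'_def
    by (simp add: inf_commute)
  obtain rm' rp' where r': "\<forall>i\<in>V. rm' i \<in> E S \<Delta> \<and> rp' i \<in> E S \<Delta> \<and> rm' i \<le> a' i \<and> a' i \<le> rp' i"
    and rz: "\<forall>\<epsilon>. beval P' (\<lambda>i. if i \<in> V then (if \<epsilon> i then rp' i else rm' i) else a' i) = bot"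
    using insert.IH[OF _ _ IHa IHb IHc] satV intV by auto
  define rm where "rm = rm'(k := - e0)"
  define rp where "rp = rp'(k := e1)"
  have ne0: "- e0 \<le> a k" using e0(2) compl_le_swap2 by blast
  show ?case
  proof (intro exI conjI ballI allI)
    fix i assume "i \<in> insert k V"
    then show "rm i \<in> E S \<Delta>" "rp i \<in> E S \<Delta>" "rm i \<le> a i" "a i \<le> rp i"
      using r' e1 e0 ne0 subD(5)[OF subalgebra_E e0(1)] insert.hyps(2) fr1 fr0 unfolding rm_def rp_def a'_def
      by (auto split: if_splits)
  next
    fix \<epsilon> :: "nat \<Rightarrow> bool"
    define w where "w = (\<lambda>i. if i \<in> insert k V then (if \<epsilon> i then rp i else rm i) else a i)"
    define w' where "w' = (\<lambda>i. if i \<in> V then (if \<epsilon> i then rp' i else rm' i) else a' i)"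
    have z: "beval P' w' = bot" using rz unfolding w'_def by blast
    have w'1: "w' k1 = e1" "w' k0 = e0" unfolding w'_def a'_def using fr1 fr0 by auto
    have cw1: "beval P (w'(k:=top)) = beval P (w(k:=top))"
      using insert.hyps(2) fr1 fr0 unfolding w_def w'_def rm_def rp_def a'_def by (intro beval_cong) auto
    have cw0: "beval P (w'(k:=bot)) = beval P (w(k:=bot))"
      using insert.hyps(2) fr1 fr0 unfolding w_def w'_def rm_def rp_def a'_def by (intro beval_cong) auto
    have "sup (inf e1 (beval P (w(k:=top)))) (inf e0 (beval P (w(k:=bot)))) = bot"
      using z ev[of w'] w'1 cw1 cw0 by simp
    then have z1: "inf e1 (beval P (w(k:=top))) = bot" and z0: "inf e0 (beval P (w(k:=bot))) = bot"
      by (simp_all add: sup_eq_bot_iff)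
    have le1: "w k \<le> e1" using ne0 e1(2) unfolding w_def rm_def rp_def by auto
    have le0: "- w k \<le> e0"
    proof -
      have "- e1 \<le> e0" using e1(2) e0(2) by (meson compl_mono order_trans)
      then show ?thesis using e0(2) unfolding w_def rm_def rp_def by auto
    qed
    have "inf (w k) (beval P (w(k:=top))) \<le> inf e1 (beval P (w(k:=top)))" using inf_mono[OF le1 order_refl] .
    then have y1: "inf (w k) (beval P (w(k:=top))) = bot" using z1 by (simp add: bot_unique)
    have "inf (- w k) (beval P (w(k:=bot))) \<le> inf e0 (beval P (w(k:=bot)))" using inf_mono[OF le0 order_refl] .
    then have y0: "inf (- w k) (beval P (w(k:=bot))) = bot" using z0 by (simp add: bot_unique)
    show "beval P w = bot" using shannon[of P w k] y1 y0 by simp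
  qed
qed


theorem lemma3p4:
  fixes B R S :: "'o::wellorder \<Rightarrow> 'b::boolean_algebra set"
    and \<Delta> :: "'o set" and \<Gamma> :: "nat \<Rightarrow> 'o set"
    and n :: nat and P :: bpoly and a :: "nat \<Rightarrow> 'b"
  assumes tsf: "tightly_sigma_filtered B R S"
    and satD: "saturated R S \<Delta>"
    and satG: "\<forall>i<n. saturated R S (\<Gamma> i)"
    and inter: "\<forall>i<n. \<forall>j<n. i \<noteq> j \<longrightarrow> \<Gamma> i \<inter> \<Gamma> j = \<Delta>"
    and vars: "bvars P \<subseteq> {..<n}"
    and a_in: "\<forall>i<n. a i \<in> E S (\<Gamma> i)"
    and P0: "beval P a = bot"
  shows "\<exists>rm rp :: nat \<Rightarrow> 'b.
           (\<forall>i<n. rm i \<in> E S \<Delta> \<and> rp i \<in> E S \<Delta> \<and> rm i \<le> a i \<and> a i \<le> rp i) \<and>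
           (\<forall>\<epsilon> :: nat \<Rightarrow> bool. beval P (\<lambda>i. if \<epsilon> i then rp i else rm i) = bot)"
proof -
  define a0 where "a0 = (\<lambda>i. if i < n then a i else bot)"
  have bt: "bot \<in> E S \<Delta>" unfolding E_def using bt_gen by auto
  have h1: "\<forall>i\<in>{..<n}. saturated R S (\<Gamma> i)" using satG by auto
  have h2: "\<forall>i\<in>{..<n}. \<forall>j\<in>{..<n}. i \<noteq> j \<longrightarrow> \<Gamma> i \<inter> \<Gamma> j \<subseteq> \<Delta>" using inter by auto
  have h3: "\<forall>i\<in>{..<n}. a0 i \<in> E S (\<Gamma> i)" using a_in unfolding a0_def by auto
  have h4: "\<forall>i. i \<notin> {..<n} \<longrightarrow> a0 i \<in> E S \<Delta>" using bt unfolding a0_def by auto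
  have h5: "beval P a0 = bot" using P0 vars unfolding a0_def by (subst beval_cong[of P _ a]) auto
  obtain rm rp where r: "\<forall>i\<in>{..<n}. rm i \<in> E S \<Delta> \<and> rp i \<in> E S \<Delta> \<and> rm i \<le> a0 i \<and> a0 i \<le> rp i"
    and z: "\<forall>\<epsilon>. beval P (\<lambda>i. if i \<in> {..<n} then (if \<epsilon> i then rp i else rm i) else a0 i) = bot"
    using G_lemma[OF tsf satD finite_lessThan h1 h2 h3 h4 h5] by blast
  show ?thesis
  proof (intro exI conjI allI impI)
    fix i assume "i < n"
    then show "rm i \<in> E S \<Delta>" "rp i \<in> E S \<Delta>" "rm i \<le> a i" "a i \<le> rp i" using r unfolding a0_def by auto
  next
    fix \<epsilon> :: "nat \<Rightarrow> bool"
    have "beval P (\<lambda>i. if \<epsilon> i then rp i else rm i) = beval P (\<lambda>i. if i \<in> {..<n} then (if \<epsilon> i then rp i else rm i) else a0 i)"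
      using vars by (intro beval_cong) auto
    then show "beval P (\<lambda>i. if \<epsilon> i then rp i else rm i) = bot" using z by simp
  qed
qed

end
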